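(* Let $d$ and $q$ be positive integers and let $G$ be a finite (loop-free) graph with maximum degree at most $d$. Put $D := d \cdot \#V(G) - 2 \cdot \#E(G)$. Then there is a $d$-regular graph $G'$ such that (1) $\#V(G') \leq 1 + \max\{3 + D/d,\ 2\lceil d/2 \rceil\} + \#V(G)$, and (2) $\hom(G, H_q) \leq \hom(G', H_q)$.
   Context: $H_q$ is the graph (loops allowed) on vertex set $\{1,2,\dots,q\}$ in which vertices $u,v$ (possibly equal) are adjacent iff $u + v \geq q$. For graphs $G, H$, $\hom(G,H)$ is the number of graph homomorphisms $G \to H$, i.e. maps $\varphi: V(G) \to V(H)$ such that $xy \in E(G)$ implies $\varphi(x)\varphi(y) \in E(H)$. *)

theory Defs
  imports Complex_Main "HOL-Library.FuncSet"
begin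

definition simple_graph :: "'a set \<Rightarrow> ('a \<Rightarrow> 'a \<Rightarrow> bool) \<Rightarrow> bool" where
  "simple_graph V E \<longleftrightarrow> finite V \<and> (\<forall>x y. E x y \<longrightarrow> x \<in> V \<and> y \<in> V)
     \<and> (\<forall>x y. E x y \<longrightarrow> E y x) \<and> (\<forall>x. \<not> E x x)"

definition degree :: "'a set \<Rightarrow> ('a \<Rightarrow> 'a \<Rightarrow> bool) \<Rightarrow> 'a \<Rightarrow> nat" where
  "degree V E v = card {u \<in> V. E v u}"

definition num_edges :: "'a set \<Rightarrow> ('a \<Rightarrow> 'a \<Rightarrow> bool) \<Rightarrow> nat" where
  "num_edges V E = card {{u, v} | u v. u \<in> V \<and> v \<in> V \<and> E u v}"

definition regular :: "nat \<Rightarrow> 'a set \<Rightarrow> ('a \<Rightarrow> 'a \<Rightarrow> bool) \<Rightarrow> bool" where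
  "regular d V E \<longleftrightarrow> (\<forall>v \<in> V. degree V E v = d)"

text \<open>Number of homomorphisms (V,E) \<rightarrow> (W,F); maps are taken extensional
  (undefined outside V), so these correspond exactly to maps V \<rightarrow> W.\<close>
definition hom_count :: "'a set \<Rightarrow> ('a \<Rightarrow> 'a \<Rightarrow> bool) \<Rightarrow> 'b set \<Rightarrow> ('b \<Rightarrow> 'b \<Rightarrow> bool) \<Rightarrow> nat" where
  "hom_count V E W F = card {\<phi> \<in> V \<rightarrow>\<^sub>E W. \<forall>x \<in> V. \<forall>y \<in> V. E x y \<longrightarrow> F (\<phi> x) (\<phi> y)}"

definition Hq_V :: "nat \<Rightarrow> nat set" where "Hq_V q = {1..q}"
definition Hq_E :: "nat \<Rightarrow> nat \<Rightarrow> nat \<Rightarrow> bool" where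
  "Hq_E q u v \<longleftrightarrow> u \<in> {1..q} \<and> v \<in> {1..q} \<and> u + v \<ge> q"

end

theory Submission
  imports Defs
begin


lemma handshake:
  assumes "simple_graph V E"
  shows "(\<Sum>v\<in>V. degree V E v) = 2 * num_edges V E"
proof -
  have fin: "finite V" and sup: "\<And>x y. E x y \<Longrightarrow> x \<in> V \<and> y \<in> V"
    and sym: "\<And>x y. E x y \<Longrightarrow> E y x" and irr: "\<And>x. \<not> E x x"
    using assms unfolding simple_graph_def by auto
  define P where "P = (SIGMA u:V. {v \<in> V. E u v})"
  define Es where "Es = {{u, v} | u v. u \<in> V \<and> v \<in> V \<and> E u v}"
  define fib where "fib e = {p \<in> P. {fst p, snd p} = e}" for e
  have finP: "finite P" unfolding P_def using fin by auto
  have cP: "card P = (\<Sum>v\<in>V. degree V E v)"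
    unfolding P_def degree_def using fin by (subst card_SigmaI) auto
  have Es_img: "Es = (\<lambda>p. {fst p, snd p}) ` P" unfolding Es_def P_def by (auto simp: image_iff; metis fst_conv snd_conv)
  have finEs: "finite Es" using Es_img finP by simp
  have PU: "P = (\<Union>e\<in>Es. fib e)" unfolding fib_def Es_img by auto
  have c2: "card (fib e) = 2" if "e \<in> Es" for e
  proof -
    from that obtain u v where uv: "u \<in> V" "v \<in> V" "E u v" "e = {u,v}" unfolding Es_def by auto
    have "u \<noteq> v" using uv irr by auto
    have "fib e = {(u,v),(v,u)}"
      unfolding fib_def P_def using uv sym \<open>u \<noteq> v\<close> by (auto simp: doubleton_eq_iff)
    then show ?thesis using \<open>u \<noteq> v\<close> by simp
  qed
  have "card P = (\<Sum>e\<in>Es. card (fib e))"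
    unfolding PU
    by (rule card_UN_disjoint) (auto simp: finEs fib_def intro: finite_subset[OF _ finP])
  also have "\<dots> = 2 * card Es" using c2 by simp
  finally show ?thesis using cP unfolding num_edges_def Es_def by simp
qed



definition cd :: "nat \<Rightarrow> nat \<Rightarrow> nat \<Rightarrow> nat" where
  "cd k u v = (let s = (int v - int u) mod int k in nat (min s (int k - s)))"

lemma cd_sym:
  assumes "k > 0" shows "cd k u v = cd k v u"
proof -
  define s where "s = (int v - int u) mod int k"
  have s': "(int u - int v) mod int k = (if s = 0 then 0 else int k - s)"
    unfolding s_def using assms by (simp add: zmod_zminus1_eq_if[of "int v - int u", simplified])
  show ?thesis unfolding cd_def Let_def s_def[symmetric] s' by auto
qed

lemma cd_zero_iff:
  assumes "u < k" "v < k" shows "cd k u v = 0 \<longleftrightarrow> u = v"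
proof -
  define s where "s = (int v - int u) mod int k"
  have k0: "k > 0" using assms by auto
  have sb: "0 \<le> s" "s < int k" unfolding s_def using k0 by auto
  have "s = 0 \<longleftrightarrow> u = v"
  proof
    assume "s = 0"
    then have "int k dvd (int v - int u)" unfolding s_def by auto
    moreover have "\<bar>int v - int u\<bar> < int k" using assms by auto
    ultimately show "u = v" using dvd_imp_le_int[of "int v - int u" "int k"] by fastforce
  qed (simp add: s_def)
  then show ?thesis unfolding cd_def Let_def s_def[symmetric] using sb by auto
qed

lemma cd_succ:
  assumes "Suc u < k" shows "cd k u (Suc u) = 1"
  using assms unfolding cd_def Let_def by auto

lemma cd_card:
  assumes "u < k"
  shows "card {v. v < k \<and> a \<le> cd k u v \<and> cd k u v \<le> b}
       = card {s. s < k \<and> a \<le> min s (k - s) \<and> min s (k - s) \<le> b}"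
proof -
  define h where "h v = nat ((int v - int u) mod int k)" for v
  have k0: "k > 0" using assms by auto
  have hk: "h v < k" for v unfolding h_def using k0 by (simp add: nat_less_iff)
  have cdh: "cd k u v = min (h v) (k - h v)" for v
  proof -
    define t where "t = (int v - int u) mod int k"
    have "0 \<le> t" "t < int k" unfolding t_def using k0 by auto
    then have "nat (min t (int k - t)) = min (nat t) (k - nat t)" by (auto simp: min_def)
    then show ?thesis unfolding cd_def h_def Let_def t_def by simp
  qed
  have inj: "inj_on h {..<k}"
  proof (rule inj_onI)
    fix v v' assume v: "v \<in> {..<k}" "v' \<in> {..<k}" "h v = h v'"
    have e: "(int v - int u) mod int k = (int v' - int u) mod int k"
      using v(3) unfolding h_def using k0 by (simp add: eq_nat_nat_iff)
    have "int v mod int k = ((int v - int u) mod int k + int u) mod int k" by (simp add: mod_add_left_eq)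
    also have "\<dots> = ((int v' - int u) mod int k + int u) mod int k" using e by simp
    also have "\<dots> = int v' mod int k" by (simp add: mod_add_left_eq)
    finally show "v = v'" using v(1,2) by simp
  qed
  have img: "h ` {..<k} = {..<k}"
    by (rule endo_inj_surj) (use inj hk in auto)
  have "h ` {v. v < k \<and> a \<le> cd k u v \<and> cd k u v \<le> b}
       = {s. s < k \<and> a \<le> min s (k - s) \<and> min s (k - s) \<le> b}"
  proof
    show "h ` {v. v < k \<and> a \<le> cd k u v \<and> cd k u v \<le> b}
       \<subseteq> {s. s < k \<and> a \<le> min s (k - s) \<and> min s (k - s) \<le> b}"
    proof
      fix s assume "s \<in> h ` {v. v < k \<and> a \<le> cd k u v \<and> cd k u v \<le> b}"
      then obtain v where v: "v < k" "a \<le> cd k u v" "cd k u v \<le> b" "s = h v" by blast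
      then show "s \<in> {s. s < k \<and> a \<le> min s (k - s) \<and> min s (k - s) \<le> b}"
        using hk[of v] cdh[of v] by simp
    qed
  next
    show "{s. s < k \<and> a \<le> min s (k - s) \<and> min s (k - s) \<le> b}
       \<subseteq> h ` {v. v < k \<and> a \<le> cd k u v \<and> cd k u v \<le> b}"
    proof
      fix s assume s: "s \<in> {s. s < k \<and> a \<le> min s (k - s) \<and> min s (k - s) \<le> b}"
      then have "s \<in> h ` {..<k}" using img by auto
      then obtain v where v: "v < k" "s = h v" by blast
      have "v \<in> {v. v < k \<and> a \<le> cd k u v \<and> cd k u v \<le> b}" using s v cdh[of v] by simp
      then show "s \<in> h ` {v. v < k \<and> a \<le> cd k u v \<and> cd k u v \<le> b}" using v(2) by blast
    qed
  qed
  moreover have "inj_on h {v. v < k \<and> a \<le> cd k u v \<and> cd k u v \<le> b}"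
    by (rule inj_on_subset[OF inj]) auto
  ultimately show ?thesis using card_image by fastforce
qed


lemma T_card_lt:
  assumes "1 \<le> a" "2 * b < k"
  shows "card {s. s < k \<and> a \<le> min s (k - s) \<and> min s (k - s) \<le> (b::nat)} = 2 * (b + 1 - a)"
proof -
  have "{s. s < k \<and> a \<le> min s (k - s) \<and> min s (k - s) \<le> b} = {a..b} \<union> {k-b..k-a}"
  proof (intro set_eqI iffI)
    fix s assume "s \<in> {s. s < k \<and> a \<le> min s (k - s) \<and> min s (k - s) \<le> b}"
    then show "s \<in> {a..b} \<union> {k-b..k-a}" unfolding min_def by (auto split: if_splits)
  next
    fix s assume "s \<in> {a..b} \<union> {k-b..k-a}"
    then show "s \<in> {s. s < k \<and> a \<le> min s (k - s) \<and> min s (k - s) \<le> b}"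
      using assms unfolding min_def by auto
  qed
  moreover have "{a..b} \<inter> {k-b..k-a} = {}" using assms by auto
  ultimately show ?thesis using assms by (simp add: card_Un_disjoint)
qed

lemma T_card_eq:
  assumes "2 * b = k" "b \<ge> 1"
  shows "card {s. s < k \<and> 1 \<le> min s (k - s) \<and> min s (k - s) \<le> (b::nat)} = 2 * b - 1"
proof -
  have "{s. s < k \<and> 1 \<le> min s (k - s) \<and> min s (k - s) \<le> b} = {1..<k}"
  proof (intro set_eqI iffI)
    fix s assume "s \<in> {s. s < k \<and> 1 \<le> min s (k - s) \<and> min s (k - s) \<le> b}"
    then show "s \<in> {1..<k}" unfolding min_def by (auto split: if_splits)
  next
    fix s assume "s \<in> {1..<k}"
    then show "s \<in> {s. s < k \<and> 1 \<le> min s (k - s) \<and> min s (k - s) \<le> b}"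
      using assms unfolding min_def by auto
  qed
  then show ?thesis using assms by simp
qed



definition pm :: "nat \<Rightarrow> nat \<Rightarrow> nat \<Rightarrow> nat \<Rightarrow> bool" where
  "pm lo hi u v \<longleftrightarrow> lo \<le> u \<and> u < hi \<and> lo \<le> v \<and> v < hi \<and> (if even (u - lo) then v = Suc u else u = Suc v)"

definition cg :: "nat \<Rightarrow> nat \<Rightarrow> nat \<Rightarrow> nat \<Rightarrow> nat \<Rightarrow> nat \<Rightarrow> nat \<Rightarrow> bool" where
  "cg k a b lo hi u v \<longleftrightarrow> u < k \<and> v < k \<and> ((a \<le> cd k u v \<and> cd k u v \<le> b) \<noteq> pm lo hi u v)"

lemma pm_sym: "pm lo hi u v = pm lo hi v u"
  unfolding pm_def by (cases "even (u - lo)") (auto simp: Suc_diff_le)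

lemma pm_irrefl: "\<not> pm lo hi u u"
  unfolding pm_def by auto

lemma pm_unique:
  assumes "even (hi - lo)" "lo \<le> u" "u < hi"
  shows "{v. pm lo hi u v} = {if even (u - lo) then Suc u else u - 1}"
proof (cases "even (u - lo)")
  case True
  have "Suc u \<noteq> hi"
  proof
    assume "Suc u = hi"
    then have "hi - lo = Suc (u - lo)" using assms by auto
    then show False using True assms(1) by simp
  qed
  then show ?thesis using True assms unfolding pm_def by auto
next
  case False
  then have "u \<noteq> lo" by auto
  then show ?thesis using False assms unfolding pm_def by (auto simp: Suc_diff_le)
qed

lemma pm_cd:
  assumes "pm lo hi u v" "hi \<le> k"
  shows "cd k u v = 1"
proof (cases "even (u - lo)")
  case True
  then have "v = Suc u" "Suc u < k" using assms unfolding pm_def by auto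
  then show ?thesis using cd_succ by simp
next
  case False
  then have "u = Suc v" "Suc v < k" using assms unfolding pm_def by auto
  then show ?thesis using cd_succ cd_sym[of k v u] by simp
qed

lemma cg_sym: "cg k a b lo hi u v \<Longrightarrow> cg k a b lo hi v u"
  unfolding cg_def using cd_sym[of k u v] pm_sym[of lo hi u v] by auto

lemma cg_irrefl: "1 \<le> a \<Longrightarrow> \<not> cg k a b lo hi u u"
  unfolding cg_def using cd_zero_iff[of u k u] pm_irrefl by auto

lemma cg_deg:
  assumes "1 \<le> a" "hi \<le> k" "even (hi - lo)" "u < k"
  shows "card {v. v < k \<and> cg k a b lo hi u v} =
    (if lo \<le> u \<and> u < hi then (if a \<le> 1 \<and> 1 \<le> b then card {v. v < k \<and> a \<le> cd k u v \<and> cd k u v \<le> b} - 1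
       else Suc (card {v. v < k \<and> a \<le> cd k u v \<and> cd k u v \<le> b}))
     else card {v. v < k \<and> a \<le> cd k u v \<and> cd k u v \<le> b})"
proof -
  define N where "N = {v. v < k \<and> a \<le> cd k u v \<and> cd k u v \<le> b}"
  have finN: "finite N" unfolding N_def by auto
  show ?thesis
  proof (cases "lo \<le> u \<and> u < hi")
    case False
    then have "\<not> pm lo hi u v" for v unfolding pm_def by auto
    then have "{v. v < k \<and> cg k a b lo hi u v} = N" unfolding N_def cg_def using assms by auto
    then show ?thesis using False N_def by auto
  next
    case True
    define p where "p = (if even (u - lo) then Suc u else u - 1)"
    have pmu: "pm lo hi u v \<longleftrightarrow> v = p" for v using pm_unique[OF assms(3)] True unfolding p_def by blast
    have pp: "pm lo hi u p" using pmu by simp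
    have pk: "p < k" using pp assms unfolding pm_def by auto
    have cdp: "cd k u p = 1" using pm_cd[OF pp assms(2)] .
    show ?thesis
    proof (cases "a \<le> 1 \<and> 1 \<le> b")
      case True
      then have "p \<in> N" unfolding N_def using pk cdp by auto
      moreover have "{v. v < k \<and> cg k a b lo hi u v} = N - {p}"
        unfolding N_def cg_def using assms pmu cdp True by auto
      ultimately have "card {v. v < k \<and> cg k a b lo hi u v} = card N - 1" using finN by (simp add: card_Diff_singleton)
      then show ?thesis using \<open>lo \<le> u \<and> u < hi\<close> True unfolding N_def by presburger
    next
      case False
      then have "p \<notin> N" unfolding N_def using pk cdp by auto
      moreover have "{v. v < k \<and> cg k a b lo hi u v} = insert p N"
        unfolding N_def cg_def using assms pmu cdp False pk by auto
      ultimately have "card {v. v < k \<and> cg k a b lo hi u v} = Suc (card N)" using finN by simp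
      then show ?thesis using \<open>lo \<le> u \<and> u < hi\<close> False unfolding N_def by presburger
    qed
  qed
qed



lemma realize:
  assumes "c < k" "rho < k" "0 < rho \<Longrightarrow> 1 \<le> c" "even (c * k - rho)"
  shows "\<exists>F. (\<forall>u v. F u v \<longrightarrow> u < k \<and> v < k \<and> u \<noteq> v) \<and> (\<forall>u v. F u v \<longrightarrow> F v u)
     \<and> (\<forall>u<k. card {v. v < k \<and> F u v} = c - (if u < rho then 1 else 0))"
proof -
  define b where "b = (c + 1) div 2"
  have rle: "rho \<le> c * k"
  proof (cases "rho = 0")
    case False
    then have "1 \<le> c" using assms(3) by auto
    then have "k \<le> c * k" by simp
    then show ?thesis using assms(2) by linarith
  qed simp
  show ?thesis
  proof (cases "even c \<or> c = k - 1")
    case True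
    define F where "F = cg k 1 b 0 rho"
    have eck: "even (c * k)"
      using True proof
      assume "c = k - 1"
      then show "even (c * k)" by (cases "even k") auto
    qed simp
    have erho: "even rho"
    proof -
      have "c * k = (c * k - rho) + rho" using rle by simp
      then show ?thesis using eck assms(4) by (metis even_add)
    qed
    have cardN: "card {v. v < k \<and> 1 \<le> cd k u v \<and> cd k u v \<le> b} = c" if "u < k" for u
    proof -
      have e: "card {v. v < k \<and> 1 \<le> cd k u v \<and> cd k u v \<le> b}
            = card {s. s < k \<and> 1 \<le> min s (k - s) \<and> min s (k - s) \<le> b}"
        by (rule cd_card[OF that])
      show ?thesis
      proof (cases "even c")
        case True
        then have "2 * b = c" unfolding b_def by auto
        then show ?thesis using e T_card_lt[of 1 b k] assms(1) by simp
      next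
        case False
        then have ck: "c = k - 1" using \<open>even c \<or> c = k - 1\<close> by auto
        have "2 * b = k" "b \<ge> 1" using False ck assms(1) unfolding b_def by auto
        then show ?thesis using e T_card_eq[of b k] ck by simp
      qed
    qed
    have "\<forall>u<k. card {v. v < k \<and> F u v} = c - (if u < rho then 1 else 0)"
    proof (intro allI impI)
      fix u assume u: "u < k"
      have d: "card {v. v < k \<and> F u v} =
        (if 0 \<le> u \<and> u < rho then (if 1 \<le> (1::nat) \<and> 1 \<le> b then c - 1 else Suc c) else c)"
        unfolding F_def using cg_deg[of 1 rho k 0 u b] erho assms(2) u cardN[OF u] by simp
      show "card {v. v < k \<and> F u v} = c - (if u < rho then 1 else 0)"
      proof (cases "u < rho")
        case True
        then have "1 \<le> c" using assms(3) by auto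
        then have "1 \<le> b" unfolding b_def by auto
        then show ?thesis using d True by simp
      qed (use d in simp)
    qed
    moreover have "\<forall>u v. F u v \<longrightarrow> u < k \<and> v < k \<and> u \<noteq> v"
    proof (intro allI impI)
      fix u v assume Fuv: "F u v"
      have "u \<noteq> v" using Fuv cg_irrefl[of 1 k b 0 rho u] unfolding F_def by auto
      moreover have "u < k \<and> v < k" using Fuv unfolding F_def cg_def by auto
      ultimately show "u < k \<and> v < k \<and> u \<noteq> v" by simp
    qed
    moreover have "\<forall>u v. F u v \<longrightarrow> F v u" unfolding F_def using cg_sym by blast
    ultimately show ?thesis by blast
  next
    case False
    then have codd: "odd c" and ck: "c + 1 < k" using assms(1) by auto
    define F where "F = cg k 2 b rho k"
    have ekr: "even (k - rho)"
    proof -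
      obtain m where m: "c = 2 * m + 1" using codd oddE by blast
      have "c * k - rho = 2 * (m * k) + (k - rho)" using m assms(2) by (simp add: algebra_simps)
      then show ?thesis using assms(4) by simp
    qed
    have cardN: "card {v. v < k \<and> 2 \<le> cd k u v \<and> cd k u v \<le> b} = c - 1" if "u < k" for u
    proof -
      have e: "card {v. v < k \<and> 2 \<le> cd k u v \<and> cd k u v \<le> b}
            = card {s. s < k \<and> 2 \<le> min s (k - s) \<and> min s (k - s) \<le> b}"
        by (rule cd_card[OF that])
      have "2 * b = c + 1" unfolding b_def using codd by auto
      then show ?thesis using e T_card_lt[of 2 b k] ck by simp
    qed
    have "\<forall>u<k. card {v. v < k \<and> F u v} = c - (if u < rho then 1 else 0)"
    proof (intro allI impI)
      fix u assume u: "u < k"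
      have d: "card {v. v < k \<and> F u v} =
        (if rho \<le> u \<and> u < k then (if 2 \<le> (1::nat) \<and> 1 \<le> b then c - 1 - 1 else Suc (c - 1)) else c - 1)"
        unfolding F_def using cg_deg[of 2 k k rho u b] ekr u cardN[OF u] by simp
      show "card {v. v < k \<and> F u v} = c - (if u < rho then 1 else 0)"
        using d u codd by (cases "u < rho") (auto simp: odd_pos)
    qed
    moreover have "\<forall>u v. F u v \<longrightarrow> u < k \<and> v < k \<and> u \<noteq> v"
    proof (intro allI impI)
      fix u v assume Fuv: "F u v"
      have "u \<noteq> v" using Fuv cg_irrefl[of 2 k b rho k u] unfolding F_def by auto
      moreover have "u < k \<and> v < k" using Fuv unfolding F_def cg_def by auto
      ultimately show "u < k \<and> v < k \<and> u \<noteq> v" by simp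
    qed
    moreover have "\<forall>u v. F u v \<longrightarrow> F v u" unfolding F_def using cg_sym by blast
    ultimately show ?thesis by blast
  qed
qed



lemma mod_inj_interval:
  fixes k :: nat
  assumes "P \<le> p" "p < P + r" "P \<le> p'" "p' < P + r" "r \<le> k" "p mod k = p' mod k"
  shows "p = p'"
proof (rule ccontr)
  assume ne: "p \<noteq> p'"
  show False
  proof (cases "p \<le> p'")
    case True
    then have "k dvd p' - p" using assms(6) mod_eq_dvd_iff_nat[of p p' k] by simp
    moreover have "0 < p' - p" "p' - p < k" using True ne assms by auto
    ultimately show False using dvd_imp_le by fastforce
  next
    case False
    then have "k dvd p - p'" using assms(6) mod_eq_dvd_iff_nat[of p' p k] by simp
    moreover have "0 < p - p'" "p - p' < k" using False ne assms by auto
    ultimately show False using dvd_imp_le by fastforce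
  qed
qed

definition stubB :: "nat \<Rightarrow> (nat \<Rightarrow> nat) \<Rightarrow> nat \<Rightarrow> nat \<Rightarrow> bool" where
  "stubB k r i w \<longleftrightarrow> (\<exists>p. (\<Sum>j<i. r j) \<le> p \<and> p < (\<Sum>j<i. r j) + r i \<and> p mod k = w)"

lemma stub_S1:
  assumes "r i \<le> k"
  shows "card {w. w < k \<and> stubB k r i w} = r i"
proof -
  define P where "P = (\<Sum>j<i. r j)"
  have k0: "r i > 0 \<Longrightarrow> k > 0" using assms by auto
  have eq: "{w. w < k \<and> stubB k r i w} = (\<lambda>p. p mod k) ` {P..<P + r i}"
  proof (cases "r i = 0")
    case True then show ?thesis unfolding stubB_def P_def by auto
  next
    case False
    then have "k > 0" using k0 by auto
    then show ?thesis unfolding stubB_def P_def by auto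
  qed
  have "inj_on (\<lambda>p. p mod k) {P..<P + r i}"
    by (rule inj_onI) (use mod_inj_interval[of P _ "r i" _ k] assms in auto)
  then show ?thesis unfolding eq by (simp add: card_image)
qed

lemma stub_S2:
  assumes "\<And>i. i < n \<Longrightarrow> r i \<le> k"
  shows "card {i. i < n \<and> stubB k r i w} = card {p. p < (\<Sum>j<n. r j) \<and> p mod k = w}"
  using assms
proof (induction n)
  case 0 then show ?case by simp
next
  case (Suc n)
  define P where "P = (\<Sum>j<n. r j)"
  have pr: "\<And>i. i < n \<Longrightarrow> r i \<le> k" using Suc.prems by simp
  have IH: "card {i. i < n \<and> stubB k r i w} = card {p. p < P \<and> p mod k = w}"
    unfolding P_def by (rule Suc.IH[OF pr])
  have rn: "r n \<le> k" using Suc.prems by simp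
  define X where "X = {p. P \<le> p \<and> p < P + r n \<and> p mod k = w}"
  have cX: "card X = (if stubB k r n w then 1 else 0)"
  proof (cases "stubB k r n w")
    case True
    then obtain p where p: "P \<le> p" "p < P + r n" "p mod k = w" unfolding stubB_def P_def by blast
    have "X \<subseteq> {p}"
    proof
      fix p' assume "p' \<in> X"
      then have "P \<le> p'" "p' < P + r n" "p' mod k = w" unfolding X_def by auto
      then have "p' = p" using mod_inj_interval[of P p' "r n" p k] p rn by simp
      then show "p' \<in> {p}" by simp
    qed
    moreover have "p \<in> X" unfolding X_def using p by simp
    ultimately have "X = {p}" by blast
    then show ?thesis using True by simp
  next
    case False
    then have "X = {}" unfolding X_def stubB_def P_def by blast
    then show ?thesis using False by simp
  qed
  have sP: "(\<Sum>j<Suc n. r j) = P + r n" unfolding P_def by simp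
  have s1: "{p. p < (\<Sum>j<Suc n. r j) \<and> p mod k = w} = {p. p < P \<and> p mod k = w} \<union> X"
    unfolding X_def sP by auto
  have s2: "{i. i < Suc n \<and> stubB k r i w} = {i. i < n \<and> stubB k r i w} \<union> (if stubB k r n w then {n} else {})"
    by (auto simp: less_Suc_eq)
  have fX: "finite X" unfolding X_def by simp
  have "card {p. p < (\<Sum>j<Suc n. r j) \<and> p mod k = w} = card {p. p < P \<and> p mod k = w} + card X"
    unfolding s1 by (rule card_Un_disjoint) (use fX in \<open>auto simp: X_def\<close>)
  moreover have "card {i. i < Suc n \<and> stubB k r i w} = card {i. i < n \<and> stubB k r i w} + (if stubB k r n w then 1 else 0)"
    unfolding s2 by (auto simp: card_Un_disjoint)
  ultimately show ?case using IH cX by simp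
qed

lemma count_mod:
  assumes "w < (k::nat)"
  shows "card {p. p < D \<and> p mod k = w} = D div k + (if w < D mod k then 1 else 0)"
proof (induction D)
  case 0 then show ?case by simp
next
  case (Suc D)
  have s: "{p. p < Suc D \<and> p mod k = w} = {p. p < D \<and> p mod k = w} \<union> (if D mod k = w then {D} else {})"
    by (auto simp: less_Suc_eq)
  have c: "card {p. p < Suc D \<and> p mod k = w} = card {p. p < D \<and> p mod k = w} + (if D mod k = w then 1 else 0)"
    unfolding s by (auto simp: card_Un_disjoint)
  have m: "D mod k < k" using assms by auto
  show ?case
  proof (cases "Suc (D mod k) = k")
    case True
    then have "Suc D mod k = 0" "Suc D div k = Suc (D div k)" by (auto simp: mod_Suc div_Suc)
    then show ?thesis using c Suc.IH True assms by auto
  next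
    case False
    then have "Suc D mod k = Suc (D mod k)" "Suc D div k = D div k" by (auto simp: mod_Suc div_Suc)
    then show ?thesis using c Suc.IH False assms m by auto
  qed
qed



lemma img_plus: "(\<lambda>w. n + w) ` S = {y. n \<le> y \<and> y - n \<in> (S::nat set)}"
  by (auto simp: image_iff) (metis le_add_diff_inverse)

lemma two_ceil: "2 * real_of_int (ceiling (real d / 2)) = real (if even d then d else d + 1)"
proof (cases "even d")
  case True
  then obtain m where "d = 2 * m" by blast
  then show ?thesis by simp
next
  case False
  then obtain m where m: "d = 2 * m + 1" using oddE by blast
  have "ceiling (real d / 2) = int m + 1"
    by (rule ceiling_unique) (use m in auto)
  then show ?thesis using m False by simp
qed

lemma choose_k:
  fixes d Dn :: nat
  assumes "d > 0" "odd d \<or> even Dn"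
  shows "\<exists>k. d + 1 \<le> k \<and> Dn \<le> d * k \<and> even (d * k + Dn)
     \<and> real k \<le> max (4 + real Dn / real d) (1 + 2 * real_of_int (ceiling (real d / 2)))"
proof -
  define t where "t = (Dn + d - 1) div d"
  define k0 where "k0 = max (d + 1) t"
  define k where "k = (if even (d * k0 + Dn) then k0 else k0 + 1)"
  have tle: "Dn \<le> d * t"
  proof -
    have "Dn + d - 1 = d * t + (Dn + d - 1) mod d" unfolding t_def by simp
    moreover have "(Dn + d - 1) mod d < d" using assms by simp
    ultimately show ?thesis by linarith
  qed
  have tr: "real t \<le> real Dn / real d + 1"
  proof -
    have "d * t \<le> Dn + d - 1" unfolding t_def by (simp add: mult.commute)
    then have "real d * real t \<le> real Dn + real d" by (metis add_diff_cancel_right' diff_le_self le_trans of_nat_add of_nat_le_iff of_nat_mult)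
    then have "real t \<le> (real Dn + real d) / real d" using assms by (simp add: field_simps)
    also have "\<dots> = real Dn / real d + 1" using assms by (simp add: field_simps)
    finally show ?thesis .
  qed
  have k1: "d + 1 \<le> k" unfolding k_def k0_def by auto
  have k2: "Dn \<le> d * k"
  proof -
    have "d * t \<le> d * k" unfolding k_def k0_def by auto
    then show ?thesis using tle by linarith
  qed
  have k3: "even (d * k + Dn)"
  proof (cases "even (d * k0 + Dn)")
    case False
    then have "odd d" using assms(2) by auto
    then show ?thesis using False unfolding k_def by simp
  qed (simp add: k_def)
  have k4: "real k \<le> max (4 + real Dn / real d) (1 + 2 * real_of_int (ceiling (real d / 2)))"
  proof (cases "t \<le> d + 1")
    case True
    then have "k0 = d + 1" unfolding k0_def by simp
    then have "real k \<le> 1 + 2 * real_of_int (ceiling (real d / 2))"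
    proof (cases "even d")
      case True
      then have "k = k0" unfolding k_def using assms(2) by auto
      then show ?thesis unfolding two_ceil using True \<open>k0 = d + 1\<close> by simp
    next
      case False
      then show ?thesis unfolding two_ceil k_def using \<open>k0 = d + 1\<close> by simp
    qed
    then show ?thesis by linarith
  next
    case False
    then have "k0 = t" unfolding k0_def by simp
    then have "real k \<le> real t + 1" unfolding k_def by auto
    then show ?thesis using tr by linarith
  qed
  show ?thesis using k1 k2 k3 k4 by blast
qed



theorem lemma3p4:
  fixes d q :: nat and V :: "'a set" and E :: "'a \<Rightarrow> 'a \<Rightarrow> bool"
  assumes "d > 0" and "q > 0"
    and "simple_graph V E"
    and "\<forall>v \<in> V. degree V E v \<le> d"
  defines "D \<equiv> int d * int (card V) - 2 * int (num_edges V E)"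
  shows "\<exists>(V' :: nat set) E'. simple_graph V' E' \<and> regular d V' E'
     \<and> real (card V') \<le> 1 + max (3 + real_of_int D / real d) (2 * real_of_int (ceiling (real d / 2))) + real (card V)
     \<and> hom_count V E (Hq_V q) (Hq_E q) \<le> hom_count V' E' (Hq_V q) (Hq_E q)"
proof -
  have fin: "finite V" and sup: "\<And>x y. E x y \<Longrightarrow> x \<in> V \<and> y \<in> V"
    and sym: "\<And>x y. E x y \<Longrightarrow> E y x" and irr: "\<And>x. \<not> E x x"
    using assms(3) unfolding simple_graph_def by auto
  define n where "n = card V"
  obtain g where g: "bij_betw g {0..<n} V" using ex_bij_betw_nat_finite[OF fin] n_def by blast
  have gV: "i < n \<Longrightarrow> g i \<in> V" for i using g by (auto simp: bij_betw_def)
  define r where "r i = d - degree V E (g i)" for i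
  define Dn where "Dn = (\<Sum>i<n. r i)"
  have rd: "r i \<le> d" for i unfolding r_def by simp
  have sumdeg: "(\<Sum>i<n. degree V E (g i)) = (\<Sum>v\<in>V. degree V E v)"
    using sum.reindex_bij_betw[OF g, of "degree V E"] by (simp add: atLeast0LessThan)
  have DnD: "int Dn = D"
  proof -
    have "int Dn = (\<Sum>i<n. int d - int (degree V E (g i)))"
      unfolding Dn_def r_def using assms(4) gV by (simp add: of_nat_diff)
    also have "\<dots> = int d * int n - int (\<Sum>i<n. degree V E (g i))"
      by (simp add: sum_subtractf of_nat_sum)
    also have "\<dots> = int d * int n - int (\<Sum>v\<in>V. degree V E v)" using sumdeg by simp
    also have "\<dots> = D" unfolding D_def handshake[OF assms(3)] n_def by simp
    finally show ?thesis .
  qed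
  have par: "odd d \<or> even Dn"
  proof (cases "even d")
    case True
    have "int Dn + 2 * int (num_edges V E) = int d * int n" using DnD unfolding D_def n_def by simp
    then have "Dn + 2 * num_edges V E = d * n" by (simp only: of_nat_eq_iff[symmetric, where ?'a=int]) simp
    then have "even (Dn + 2 * num_edges V E)" using True by simp
    then show ?thesis by simp
  qed simp
  obtain k where k1: "d + 1 \<le> k" and k2: "Dn \<le> d * k" and k3: "even (d * k + Dn)"
    and k4: "real k \<le> max (4 + real Dn / real d) (1 + 2 * real_of_int (ceiling (real d / 2)))"
    using choose_k[OF assms(1) par] by blast
  have rk: "r i \<le> k" for i using rd[of i] k1 by simp
  define q0 where "q0 = Dn div k"
  define rho where "rho = Dn mod k"
  define c where "c = d - q0"
  have kpos: "k > 0" using k1 by simp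
  have Dnqr: "Dn = q0 * k + rho" unfolding q0_def rho_def by simp
  have q0d: "q0 \<le> d"
  proof (rule ccontr)
    assume "\<not> q0 \<le> d"
    then have "(d + 1) * k \<le> q0 * k" using mult_le_mono1[of "d + 1" q0 k] by simp
    then have "d * k + k \<le> Dn" using Dnqr by simp
    then show False using k2 kpos by simp
  qed
  have r1: "c < k" unfolding c_def using k1 by simp
  have r2: "rho < k" unfolding rho_def using kpos by simp
  have r3: "1 \<le> c" if "0 < rho"
  proof (rule ccontr)
    assume "\<not> 1 \<le> c"
    then have "q0 = d" unfolding c_def using q0d by simp
    then have "d * k < Dn" using Dnqr that by simp
    then show False using k2 by simp
  qed
  have ck: "c * k - rho = d * k - Dn"
    unfolding c_def Dnqr by (simp add: diff_mult_distrib)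
  have r4: "even (c * k - rho)"
  proof -
    have "d * k + Dn = (d * k - Dn) + 2 * Dn" using k2 by simp
    then show ?thesis unfolding ck using k3 by (metis dvd_add_left_iff even_mult_iff even_numeral)
  qed
  obtain F where Fb: "\<And>u v. F u v \<Longrightarrow> u < k \<and> v < k \<and> u \<noteq> v" and Fs: "\<And>u v. F u v \<Longrightarrow> F v u"
    and Fd: "\<And>u. u < k \<Longrightarrow> card {v. v < k \<and> F u v} = c - (if u < rho then 1 else 0)"
    using realize[OF r1 r2 r3 r4] by blast
  define V' where "V' = {0..<n + k}"
  define E' where "E' x y \<longleftrightarrow> (x < n \<and> y < n \<and> E (g x) (g y))
     \<or> (x < n \<and> n \<le> y \<and> y < n + k \<and> stubB k r x (y - n))
     \<or> (y < n \<and> n \<le> x \<and> x < n + k \<and> stubB k r y (x - n))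
     \<or> (n \<le> x \<and> n \<le> y \<and> F (x - n) (y - n))" for x y
  have sg: "simple_graph V' E'"
  proof -
    have "E' x y \<Longrightarrow> x \<in> V' \<and> y \<in> V'" for x y
      unfolding E'_def V'_def using Fb[of "x - n" "y - n"] by auto
    moreover have "E' x y \<Longrightarrow> E' y x" for x y
      unfolding E'_def using sym Fs by blast
    moreover have "\<not> E' x x" for x
      unfolding E'_def using irr Fb[of "x - n" "x - n"] by auto
    ultimately show ?thesis unfolding simple_graph_def V'_def by auto
  qed
  have reg: "regular d V' E'"
    unfolding regular_def
  proof
    fix x assume xV: "x \<in> V'"
    show "degree V' E' x = d"
    proof (cases "x < n")
      case True
      have eq: "{y \<in> V'. E' x y} = {y. y < n \<and> E (g x) (g y)} \<union> (\<lambda>w. n + w) ` {w. w < k \<and> stubB k r x w}"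
        unfolding img_plus V'_def E'_def using True by auto
      have c1: "card {y. y < n \<and> E (g x) (g y)} = degree V E (g x)"
      proof -
        have "g ` {y. y < n \<and> E (g x) (g y)} = {u \<in> V. E (g x) u}"
        proof
          show "g ` {y. y < n \<and> E (g x) (g y)} \<subseteq> {u \<in> V. E (g x) u}" using gV by auto
        next
          show "{u \<in> V. E (g x) u} \<subseteq> g ` {y. y < n \<and> E (g x) (g y)}"
          proof
            fix u assume "u \<in> {u \<in> V. E (g x) u}"
            then have u: "u \<in> V" "E (g x) u" by auto
            then obtain y where "y \<in> {0..<n}" "g y = u" using g by (auto simp: bij_betw_def)
            then show "u \<in> g ` {y. y < n \<and> E (g x) (g y)}" using u by auto
          qed
        qed
        moreover have "inj_on g {y. y < n \<and> E (g x) (g y)}"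
          using g by (auto simp: bij_betw_def intro: inj_on_subset)
        ultimately show ?thesis unfolding degree_def by (metis card_image)
      qed
      have c2: "card ((\<lambda>w. n + w) ` {w. w < k \<and> stubB k r x w}) = r x"
        using stub_S1[of r x k] rd[of x] k1 by (simp add: card_image)
      have "card {y \<in> V'. E' x y} = degree V E (g x) + r x"
        unfolding eq using c1 c2 by (subst card_Un_disjoint) auto
      also have "\<dots> = d" unfolding r_def using assms(4) gV[OF True] by simp
      finally show ?thesis unfolding degree_def .
    next
      case False
      define w where "w = x - n"
      have w: "w < k" "x = n + w" using False xV unfolding w_def V'_def by auto
      have eq: "{y \<in> V'. E' x y} = {i. i < n \<and> stubB k r i w} \<union> (\<lambda>v. n + v) ` {v. v < k \<and> F w v}"
        unfolding img_plus V'_def E'_def using False w by (auto dest: Fb)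
      have c1: "card {i. i < n \<and> stubB k r i w} = q0 + (if w < rho then 1 else 0)"
      proof -
        have "card {i. i < n \<and> stubB k r i w} = card {p. p < Dn \<and> p mod k = w}"
          unfolding Dn_def by (rule stub_S2) (rule rk)
        also have "\<dots> = q0 + (if w < rho then 1 else 0)"
          unfolding q0_def rho_def by (rule count_mod[OF w(1)])
        finally show ?thesis .
      qed
      have c2: "card ((\<lambda>v. n + v) ` {v. v < k \<and> F w v}) = c - (if w < rho then 1 else 0)"
        using Fd[OF w(1)] by (simp add: card_image)
      have "card {y \<in> V'. E' x y} = q0 + (if w < rho then 1 else 0) + (c - (if w < rho then 1 else 0))"
        unfolding eq using c1 c2 by (subst card_Un_disjoint) auto
      also have "\<dots> = d" unfolding c_def using q0d r3 rho_def c_def by (cases "w < rho") auto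
      finally show ?thesis unfolding degree_def .
    qed
  qed
  have cardV': "card V' = n + k" unfolding V'_def by simp
  have bound: "real (card V') \<le> 1 + max (3 + real_of_int D / real d) (2 * real_of_int (ceiling (real d / 2))) + real (card V)"
  proof -
    have "real_of_int D = real Dn" using DnD by simp
    then show ?thesis unfolding cardV' n_def using k4 by (simp add: max_def split: if_splits)
  qed
  define ext where "ext \<phi> = (\<lambda>x. if x < n then \<phi> (g x) else if x < n + k then q else undefined)" for \<phi> :: "'a \<Rightarrow> nat"
  define H1 where "H1 = {\<phi> \<in> V \<rightarrow>\<^sub>E Hq_V q. \<forall>x \<in> V. \<forall>y \<in> V. E x y \<longrightarrow> Hq_E q (\<phi> x) (\<phi> y)}"
  define H2 where "H2 = {\<phi> \<in> V' \<rightarrow>\<^sub>E Hq_V q. \<forall>x \<in> V'. \<forall>y \<in> V'. E' x y \<longrightarrow> Hq_E q (\<phi> x) (\<phi> y)}"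
  have into: "ext ` H1 \<subseteq> H2"
  proof
    fix \<psi> assume "\<psi> \<in> ext ` H1"
    then obtain \<phi> where ph: "\<phi> \<in> H1" "\<psi> = ext \<phi>" by auto
    have phV: "\<phi> v \<in> {1..q}" if "v \<in> V" for v using ph(1) that unfolding H1_def Hq_V_def by auto
    have qq: "q \<in> {1..q}" using assms(2) by simp
    have "\<psi> \<in> V' \<rightarrow>\<^sub>E Hq_V q"
      unfolding ph(2) ext_def V'_def Hq_V_def using phV gV qq by auto
    moreover have "Hq_E q (\<psi> x) (\<psi> y)" if "x \<in> V'" "y \<in> V'" "E' x y" for x y
    proof (cases "x < n \<and> y < n")
      case True
      then have "E (g x) (g y)" using that(3) unfolding E'_def by auto
      then show ?thesis using ph(1) gV True unfolding H1_def ph(2) ext_def by auto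
    next
      case False
      have vx: "\<psi> x \<in> {1..q}" and vy: "\<psi> y \<in> {1..q}"
        using that(1,2) phV gV qq unfolding ph(2) ext_def V'_def by auto
      have "\<psi> x = q \<or> \<psi> y = q" using False that(1,2) unfolding ph(2) ext_def V'_def by auto
      then show ?thesis using vx vy unfolding Hq_E_def by auto
    qed
    ultimately show "\<psi> \<in> H2" unfolding H2_def by auto
  qed
  have gimg: "g ` {0..<n} = V" using g by (simp add: bij_betw_def)
  have inj: "inj_on ext H1"
  proof (rule inj_onI)
    fix \<phi>1 \<phi>2 assume h: "\<phi>1 \<in> H1" "\<phi>2 \<in> H1" "ext \<phi>1 = ext \<phi>2"
    have p1: "\<phi>1 \<in> V \<rightarrow>\<^sub>E Hq_V q" and p2: "\<phi>2 \<in> V \<rightarrow>\<^sub>E Hq_V q" using h(1,2) unfolding H1_def by blast+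
    show "\<phi>1 = \<phi>2"
    proof
      fix v show "\<phi>1 v = \<phi>2 v"
      proof (cases "v \<in> V")
        case True
        then have "v \<in> g ` {0..<n}" using gimg by simp
        then obtain i where i: "i < n" "v = g i" by auto
        have "ext \<phi>1 i = ext \<phi>2 i" using h(3) by simp
        then show ?thesis using i unfolding ext_def by simp
      next
        case False
        then show ?thesis using PiE_arb[OF p1 False] PiE_arb[OF p2 False] by simp
      qed
    qed
  qed
  have finH2: "finite H2"
  proof (rule finite_subset)
    show "H2 \<subseteq> V' \<rightarrow>\<^sub>E Hq_V q" unfolding H2_def by auto
    show "finite (V' \<rightarrow>\<^sub>E Hq_V q)" unfolding V'_def Hq_V_def by (rule finite_PiE) auto
  qed
  have "card H1 \<le> card H2" by (rule card_inj_on_le[OF inj into finH2])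
  then have "hom_count V E (Hq_V q) (Hq_E q) \<le> hom_count V' E' (Hq_V q) (Hq_E q)"
    unfolding hom_count_def H1_def H2_def .
  then show ?thesis using sg reg bound by blast
qed

end
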